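(* Let $1\le k\le n-1$ and let $\Sigma=\mathbb{S}^k\times\mathbb{R}^{n-k}\subset\mathbb{R}^{n+1}$ be a self-shrinker, with Euclidean coordinates $\vec x=(x_{k+1},\dots,x_n)$ on the $\mathbb{R}^{n-k}$ factor (and $x_n$ any one of these linear coordinates). Then the following subsets of $\Sigma$ are stable: (1) $\{x_n>\sqrt2\}$; (2) $\{|x_n|<\sqrt2\}$; (3) $\{x_n<-\sqrt2\}$; (4) $\{|\vec x|>\sqrt{2(n-k)}\}$; (5) $\{|\vec x|<\sqrt{2(n-k)}\}$.
   Context: $\mathbb{S}^k$ is the round sphere of radius $\sqrt{2k}$ centered at the origin of $\mathbb{R}^{k+1}$. Stability operator: $Lf=\Delta f-\tfrac12\langle\vec x,\nabla f\rangle+(|A|^2+\tfrac12)f$. A region $\Omega$ is stable if there is a function $u$ with $Lu=0$ and $u>0$ on $\Omega$. *)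

theory Defs
  imports "HOL-Analysis.Analysis"
begin

text \<open>Ambient space R^{n+1} = 'a \<times> 'b with 'a = R^{k+1} (sphere factor) and
  'b = R^{n-k} (flat factor).  So k = DIM('a) - 1 and n - k = DIM('b).\<close>

definition sph_dim :: "'a::euclidean_space itself \<Rightarrow> nat" where
  "sph_dim _ = DIM('a) - 1"

definition sph_radius :: "'a::euclidean_space itself \<Rightarrow> real" where
  "sph_radius T = sqrt (2 * real (sph_dim T))"

definition cyl_shrinker :: "('a::euclidean_space \<times> 'b::euclidean_space) set" where
  "cyl_shrinker = {z. norm (fst z) = sph_radius TYPE('a)}"

text \<open>Geometric data of Sigma: outward unit normal, scalar mean curvature H
  (mean curvature vector = - H nu), and |A|^2 (k principal curvatures 1/R).\<close>
definition cyl_normal :: "('a::euclidean_space \<times> 'b::euclidean_space) \<Rightarrow> 'a \<times> 'b" where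
  "cyl_normal z = (fst z /\<^sub>R sph_radius TYPE('a), 0)"

definition cyl_H :: "('a::euclidean_space \<times> 'b::euclidean_space) itself \<Rightarrow> real" where
  "cyl_H _ = real (sph_dim TYPE('a)) / sph_radius TYPE('a)"

definition cyl_Asq :: "('a::euclidean_space \<times> 'b::euclidean_space) itself \<Rightarrow> real" where
  "cyl_Asq _ = real (sph_dim TYPE('a)) / (sph_radius TYPE('a))\<^sup>2"

text \<open>For a C^2 ambient function u with derivative Du and second derivative D2u,
  the Laplace-Beltrami operator of the hypersurface Sigma at a point z of Sigma:
  Delta_Sigma u = Delta u - D^2u(nu,nu) - H <grad u, nu>.\<close>
definition cyl_laplacian ::
  "(('a::euclidean_space \<times> 'b::euclidean_space) \<Rightarrow> ('a \<times> 'b) \<Rightarrow>\<^sub>L real)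
   \<Rightarrow> (('a \<times> 'b) \<Rightarrow> ('a \<times> 'b) \<Rightarrow>\<^sub>L (('a \<times> 'b) \<Rightarrow>\<^sub>L real))
   \<Rightarrow> ('a \<times> 'b) \<Rightarrow> real" where
  "cyl_laplacian Du D2u z =
     (\<Sum>e\<in>Basis. blinfun_apply (blinfun_apply (D2u z) e) e)
     - blinfun_apply (blinfun_apply (D2u z) (cyl_normal z)) (cyl_normal z)
     - cyl_H TYPE('a \<times> 'b) * blinfun_apply (Du z) (cyl_normal z)"

text \<open><x, grad_Sigma u> = <x, grad u> - <x, nu> <grad u, nu>.\<close>
definition cyl_pos_grad ::
  "(('a::euclidean_space \<times> 'b::euclidean_space) \<Rightarrow> ('a \<times> 'b) \<Rightarrow>\<^sub>L real) \<Rightarrow> ('a \<times> 'b) \<Rightarrow> real" where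
  "cyl_pos_grad Du z = blinfun_apply (Du z) z - (z \<bullet> cyl_normal z) * blinfun_apply (Du z) (cyl_normal z)"

definition cyl_L ::
  "(('a::euclidean_space \<times> 'b::euclidean_space) \<Rightarrow> real)
   \<Rightarrow> (('a \<times> 'b) \<Rightarrow> ('a \<times> 'b) \<Rightarrow>\<^sub>L real)
   \<Rightarrow> (('a \<times> 'b) \<Rightarrow> ('a \<times> 'b) \<Rightarrow>\<^sub>L (('a \<times> 'b) \<Rightarrow>\<^sub>L real))
   \<Rightarrow> ('a \<times> 'b) \<Rightarrow> real" where
  "cyl_L u Du D2u z = cyl_laplacian Du D2u z - (1/2) * cyl_pos_grad Du z
      + (cyl_Asq TYPE('a \<times> 'b) + 1/2) * u z"

text \<open>A region Omega of Sigma is stable if there is a (C^2) function u with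
  L u = 0 and u > 0 on Omega.  u is taken as a C^2 function on an open
  ambient neighbourhood of Omega (its Sigma-derivatives only depend on u|Sigma).\<close>
definition cyl_stable :: "('a::euclidean_space \<times> 'b::euclidean_space) set \<Rightarrow> bool" where
  "cyl_stable \<Omega> \<longleftrightarrow> \<Omega> \<subseteq> cyl_shrinker \<and>
     (\<exists>u Du D2u S. open S \<and> \<Omega> \<subseteq> S \<and>
        (\<forall>z\<in>S. (u has_derivative blinfun_apply (Du z)) (at z)) \<and>
        (\<forall>z\<in>S. (Du has_derivative blinfun_apply (D2u z)) (at z)) \<and>
        continuous_on S D2u \<and>
        (\<forall>z\<in>\<Omega>. cyl_L u Du D2u z = 0 \<and> u z > 0))"

end

theory Submission
  imports Defs
begin

lemma stable_intro:
  fixes u :: "'a::euclidean_space \<times> 'b::euclidean_space \<Rightarrow> real"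
  assumes "\<Omega> \<subseteq> cyl_shrinker" "bounded_linear Du"
    "\<And>z. (u has_derivative blinfun_apply (Du z)) (at z)"
    "\<And>z. z\<in>\<Omega> \<Longrightarrow> cyl_L u Du (\<lambda>_. Blinfun Du) z = 0 \<and> u z > 0"
  shows "cyl_stable \<Omega>"
  unfolding cyl_stable_def
  apply (intro conjI assms(1) exI[of _ u] exI[of _ Du] exI[of _ "\<lambda>_. Blinfun Du"] exI[of _ UNIV])
  using assms by (auto simp: bounded_linear_Blinfun_apply intro: bounded_linear_imp_has_derivative)

lemma Asq_half:
  assumes "DIM('a::euclidean_space) \<ge> 2"
  shows "cyl_Asq TYPE('a \<times> 'b::euclidean_space) = 1/2"
  using assms unfolding cyl_Asq_def sph_radius_def sph_dim_def by simp

lemma sum_snd_Basis: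
  "(\<Sum>e\<in>(Basis :: ('a::euclidean_space \<times> 'b::euclidean_space) set). snd e \<bullet> snd e) = real DIM('b)"
proof -
  have "(\<Sum>e\<in>(Basis :: ('a \<times> 'b) set). snd e \<bullet> snd e)
      = (\<Sum>e\<in>(\<lambda>x. (x, 0::'b)) ` (Basis::'a set). snd e \<bullet> snd e)
        + (\<Sum>e\<in>(\<lambda>y. (0::'a, y)) ` (Basis::'b set). snd e \<bullet> snd e)"
    unfolding Basis_prod_def by (subst sum.union_disjoint) auto
  also have "\<dots> = (\<Sum>y\<in>(Basis::'b set). y \<bullet> y)"
    by (simp add: sum.reindex inj_on_def)
  also have "\<dots> = real DIM('b)" by simp
  finally show ?thesis .
qed

lemma case_b:
  fixes b :: "'b::euclidean_space" and c :: real
  assumes dim: "DIM('a::euclidean_space) \<ge> 2" and b: "b \<in> Basis"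
    and \<Omega>: "\<Omega> \<subseteq> cyl_shrinker"
    and pos: "\<And>z. z \<in> \<Omega> \<Longrightarrow> c * ((snd z \<bullet> b)^2 - 2) > 0"
  shows "cyl_stable (\<Omega> :: ('a \<times> 'b) set)"
proof -
  define w :: "'a \<times> 'b" where "w = (0, b)"
  have sw: "snd z \<bullet> b = z \<bullet> w" for z :: "'a \<times> 'b" by (simp add: w_def inner_prod_def)
  have ww: "w \<bullet> w = 1" using b by (simp add: w_def inner_prod_def)
  define u where "u z = c * ((z \<bullet> w)^2 - 2)" for z :: "'a \<times> 'b"
  define Du where "Du z = (2 * c * (z \<bullet> w)) *\<^sub>R blinfun_inner_left w" for z :: "'a \<times> 'b"
  have bl: "bounded_linear Du"
    unfolding Du_def
    by (intro bounded_linear_compose[OF bounded_linear_scaleR_left]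
        bounded_linear_const_mult bounded_linear_inner_left)
  have der: "(u has_derivative blinfun_apply (Du z)) (at z)" for z
    unfolding u_def Du_def
    by (auto intro!: derivative_eq_intros simp: fun_eq_iff scaleR_blinfun.rep_eq algebra_simps power2_eq_square inner_commute)
  have nw: "cyl_normal z \<bullet> w = 0" "w \<bullet> cyl_normal z = 0" for z :: "'a \<times> 'b"
    by (simp_all add: cyl_normal_def w_def inner_prod_def)
  have lap: "(\<Sum>e\<in>Basis. blinfun_apply (blinfun_apply (Blinfun Du) e) e) = 2 * c"
  proof -
    have "(\<Sum>e\<in>Basis. blinfun_apply (blinfun_apply (Blinfun Du) e) e)
        = 2 * c * (\<Sum>e\<in>Basis. (w \<bullet> e) * (w \<bullet> e))"
      by (simp add: bounded_linear_Blinfun_apply[OF bl] Du_def scaleR_blinfun.rep_eq sum_distrib_left inner_commute mult.assoc)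
    also have "\<dots> = 2 * c" using ww by (simp add: euclidean_inner[symmetric])
    finally show ?thesis .
  qed
  show ?thesis
  proof (rule stable_intro[OF \<Omega> bl der])
    fix z assume z: "z \<in> \<Omega>"
    have "cyl_L u Du (\<lambda>_. Blinfun Du) z = 0"
      unfolding cyl_L_def cyl_laplacian_def cyl_pos_grad_def lap
      by (simp add: lap Asq_half[OF dim] bounded_linear_Blinfun_apply[OF bl] Du_def u_def scaleR_blinfun.rep_eq nw
          inner_commute power2_eq_square algebra_simps)
    moreover have "u z > 0" using pos[OF z] by (simp add: u_def sw)
    ultimately show "cyl_L u Du (\<lambda>_. Blinfun Du) z = 0 \<and> u z > 0" by simp
  qed
qed

lemma case_n:
  fixes c :: real
  assumes dim: "DIM('a::euclidean_space) \<ge> 2"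
    and \<Omega>: "\<Omega> \<subseteq> cyl_shrinker"
    and pos: "\<And>z. z \<in> \<Omega> \<Longrightarrow> c * (snd z \<bullet> snd z - 2 * real DIM('b)) > 0"
  shows "cyl_stable (\<Omega> :: ('a \<times> 'b::euclidean_space) set)"
proof -
  define u where "u z = c * (snd z \<bullet> snd z - 2 * real DIM('b))" for z :: "'a \<times> 'b"
  define Du where "Du z = (2 * c) *\<^sub>R blinfun_inner_left ((0::'a), snd z)" for z :: "'a \<times> 'b"
  have bl: "bounded_linear Du"
    unfolding Du_def
    by (intro bounded_linear_compose[OF bounded_linear_scaleR_right]
        bounded_linear_compose[OF bounded_linear_blinfun_inner_left]
        bounded_linear_Pair bounded_linear_zero bounded_linear_snd)
  have der: "(u has_derivative blinfun_apply (Du z)) (at z)" for z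
    unfolding u_def Du_def
    by (auto intro!: derivative_eq_intros simp: fun_eq_iff scaleR_blinfun.rep_eq algebra_simps inner_prod_def inner_commute)
  have lap: "(\<Sum>e\<in>Basis. blinfun_apply (blinfun_apply (Blinfun Du) e) e) = 2 * c * real DIM('b)"
  proof -
    have "(\<Sum>e\<in>Basis. blinfun_apply (blinfun_apply (Blinfun Du) e) e)
        = 2 * c * (\<Sum>e\<in>(Basis :: ('a \<times> 'b) set). snd e \<bullet> snd e)"
      by (simp add: mult.assoc bounded_linear_Blinfun_apply[OF bl] Du_def scaleR_blinfun.rep_eq sum_distrib_left inner_prod_def)
    also have "\<dots> = 2 * c * real DIM('b)" by (simp add: sum_snd_Basis)
    finally show ?thesis .
  qed
  show ?thesis
  proof (rule stable_intro[OF \<Omega> bl der])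
    fix z assume z: "z \<in> \<Omega>"
    have "cyl_L u Du (\<lambda>_. Blinfun Du) z = 0"
      unfolding cyl_L_def cyl_laplacian_def cyl_pos_grad_def lap
      by (simp add: lap Asq_half[OF dim] bounded_linear_Blinfun_apply[OF bl] Du_def u_def scaleR_blinfun.rep_eq
          cyl_normal_def inner_prod_def algebra_simps)
    moreover have "u z > 0" using pos[OF z] by (simp add: u_def)
    ultimately show "cyl_L u Du (\<lambda>_. Blinfun Du) z = 0 \<and> u z > 0" by simp
  qed
qed

theorem proposition4p5:
  fixes b :: "'b::euclidean_space"
  assumes "DIM('a::euclidean_space) \<ge> 2"
    and "b \<in> Basis"
  shows "cyl_stable {z :: 'a \<times> 'b. z \<in> cyl_shrinker \<and> snd z \<bullet> b > sqrt 2} \<and>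
         cyl_stable {z :: 'a \<times> 'b. z \<in> cyl_shrinker \<and> \<bar>snd z \<bullet> b\<bar> < sqrt 2} \<and>
         cyl_stable {z :: 'a \<times> 'b. z \<in> cyl_shrinker \<and> snd z \<bullet> b < - sqrt 2} \<and>
         cyl_stable {z :: 'a \<times> 'b. z \<in> cyl_shrinker \<and> norm (snd z) > sqrt (2 * real DIM('b))} \<and>
         cyl_stable {z :: 'a \<times> 'b. z \<in> cyl_shrinker \<and> norm (snd z) < sqrt (2 * real DIM('b))}"
proof (intro conjI)
  have sq: "sqrt (x^2) = \<bar>x\<bar>" for x :: real by simp
  have gt: "x^2 > 2" if "\<bar>x\<bar> > sqrt 2" for x :: real
    using that by (metis sq real_sqrt_less_iff)
  have lt: "x^2 < 2" if "\<bar>x\<bar> < sqrt 2" for x :: real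
    using that by (metis sq real_sqrt_less_iff)
  have nn: "norm y = sqrt (y \<bullet> y)" for y :: 'b by (simp add: norm_eq_sqrt_inner)
  show "cyl_stable {z :: 'a \<times> 'b. z \<in> cyl_shrinker \<and> snd z \<bullet> b > sqrt 2}"
    by (rule case_b[OF assms, where c=1]) (auto intro!: gt)
  show "cyl_stable {z :: 'a \<times> 'b. z \<in> cyl_shrinker \<and> \<bar>snd z \<bullet> b\<bar> < sqrt 2}"
    by (rule case_b[OF assms, where c="-1"]) (auto dest!: lt)
  show "cyl_stable {z :: 'a \<times> 'b. z \<in> cyl_shrinker \<and> snd z \<bullet> b < - sqrt 2}"
    by (rule case_b[OF assms, where c=1]) (auto intro!: gt)
  show "cyl_stable {z :: 'a \<times> 'b. z \<in> cyl_shrinker \<and> norm (snd z) > sqrt (2 * real DIM('b))}"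
    by (rule case_n[OF assms(1), where c=1]) (auto simp: nn)
  show "cyl_stable {z :: 'a \<times> 'b. z \<in> cyl_shrinker \<and> norm (snd z) < sqrt (2 * real DIM('b))}"
    by (rule case_n[OF assms(1), where c="-1"]) (auto simp: nn)
qed

end
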